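(* Let $n,m\ge 1$, $I=\{1,\dots,m\}$, and let $f(x)=x^TAx+a^Tx+\alpha$ and $g_i(x)=x^TB_ix+b_i^Tx+\beta_i$ ($i\in I$) be functions on $\mathbb{R}^n$, where $A$ is a real symmetric $n\times n$ matrix, each $B_i$ is a real symmetric positive semidefinite $n\times n$ matrix, $a,b_i\in\mathbb{R}^n$ and $\alpha,\beta_i\in\mathbb{R}$. Suppose there exist $i_0\in I$ and $\lambda\in\mathbb{R}$ such that $B_{i_0}\succ 0$ and (H1) $A+\lambda B_{i_0}\succeq 0$; (H2) there exists a nonzero $v\in\mathbb{R}^n$ with $(A+\lambda B_{i_0})v=0$, $(a+\lambda b_{i_0})^Tv\le 0$, and $B_iv=0$, $b_i^Tv\le 0$ for all $i\in I_0:=I\setminus\{i_0\}$. Then the set $\mathrm{U}(f,g_1,\dots,g_m)$ is convex.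
   Context: $\mathrm{U}(f,g_1,\dots,g_m):=\{(f(x),g_1(x),\dots,g_m(x)) : x\in\mathbb{R}^n\}+\mathbb{R}^{m+1}_+\subset\mathbb{R}^{m+1}$. Condition (H2) is the paper's condition that the recession cone of the convex set $\{x: f(x)+\lambda g_{i_0}(x)\le 0,\ g_i(x)\le 0,\ i\in I_0\}$ is different from $\{0\}$; when this set is nonempty, its recession cone equals $\{v: (A+\lambda B_{i_0})v=0,\ (a+\lambda b_{i_0})^Tv\le0,\ B_iv=0,\ b_i^Tv\le 0,\ i\in I_0\}$. $M\succeq 0$ (resp. $M\succ 0$) means $M$ is positive semidefinite (resp. positive definite). *)

theory Defs
  imports "HOL-Analysis.Analysis"
begin

definition quadf :: "real^'n^'n \<Rightarrow> real^'n \<Rightarrow> real \<Rightarrow> real^'n \<Rightarrow> real" where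
  "quadf M c d x = x \<bullet> (M *v x) + c \<bullet> x + d"

definition symmetric_mat :: "real^'n^'n \<Rightarrow> bool" where
  "symmetric_mat M \<longleftrightarrow> transpose M = M"

definition psd :: "real^'n^'n \<Rightarrow> bool" where
  "psd M \<longleftrightarrow> (\<forall>x. 0 \<le> x \<bullet> (M *v x))"

definition pd :: "real^'n^'n \<Rightarrow> bool" where
  "pd M \<longleftrightarrow> (\<forall>x. x \<noteq> 0 \<longrightarrow> 0 < x \<bullet> (M *v x))"

text \<open>Nonnegative orthant of R^{m+1} = R x R^m (first coordinate for f, index i for g_i).\<close>
definition orthant :: "(real \<times> (real^'m)) set" where
  "orthant = {q. 0 \<le> fst q \<and> (\<forall>i. 0 \<le> snd q $ i)}"

definition Uset :: "('n \<Rightarrow> real) \<Rightarrow> ('m \<Rightarrow> 'n \<Rightarrow> real) \<Rightarrow> (real \<times> (real^'m)) set" where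
  "Uset f g = {p + q | p q. p \<in> range (\<lambda>x. (f x, \<chi> i. g i x)) \<and> q \<in> orthant}"

end

theory Submission
  imports Defs
begin

lemma qsym: "symmetric_mat M \<Longrightarrow> w \<bullet> (M *v x) = x \<bullet> (M *v (w::real^'n))"
proof -
  assume s: "symmetric_mat M"
  have "w \<bullet> (M *v x) = (w v* M) \<bullet> x" by (simp add: dot_lmul_matrix)
  also have "w v* M = transpose M *v w" by simp
  also have "\<dots> = M *v w" using s by (simp add: symmetric_mat_def)
  finally show ?thesis by (simp add: inner_commute)
qed

lemma qline:
  "quadf M c d (x + s *\<^sub>R w) = quadf M c d x + s * (x \<bullet> (M *v w) + w \<bullet> (M *v x) + c \<bullet> w) + s^2 * (w \<bullet> (M *v w))"
  unfolding quadf_def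
  by (simp add: matrix_vector_right_distrib matrix_vector_mult_scaleR inner_add_left inner_add_right algebra_simps power2_eq_square)

lemma qsum: "quadf (A + lam *\<^sub>R B) (a + lam *\<^sub>R b) (alpha + lam * beta) x = quadf A a alpha x + lam * quadf B b beta x"
  unfolding quadf_def
  by (simp add: matrix_vector_mult_add_rdistrib flip: scaleR_matrix_vector_assoc add: inner_add_left inner_add_right algebra_simps)

lemma qconv:
  assumes "psd M" "0 \<le> t" "t \<le> 1"
  shows "quadf M c d (t *\<^sub>R x + (1-t) *\<^sub>R y) \<le> t * quadf M c d x + (1-t) * quadf M c d y"
proof -
  have p: "0 \<le> (x-y) \<bullet> (M *v (x-y))" using assms(1) by (simp add: psd_def)
  have e: "t * quadf M c d x + (1-t) * quadf M c d y - quadf M c d (t *\<^sub>R x + (1-t) *\<^sub>R y)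
     = t*(1-t) * ((x-y) \<bullet> (M *v (x-y)))"
    unfolding quadf_def
    by (simp add: matrix_vector_right_distrib matrix_vector_mult_diff_distrib matrix_vector_mult_scaleR
        inner_add_left inner_add_right inner_diff_left inner_diff_right algebra_simps)
  have "0 \<le> t*(1-t) * ((x-y) \<bullet> (M *v (x-y)))" using p assms by simp
  then show ?thesis using e by linarith
qed

lemma root_exists:
  fixes g d D :: real
  assumes "g > 0" "D \<ge> 0"
  shows "\<exists>s\<ge>0. s * d + s^2 * g = D"
proof -
  define r where "r = sqrt (d^2 + 4*g*D)"
  have r2: "r^2 = d^2 + 4*g*D" unfolding r_def using assms by simp
  have rge: "r \<ge> \<bar>d\<bar>"
  proof -
    have "d^2 \<le> d^2 + 4*g*D" using assms by simp
    then have "sqrt (d^2) \<le> r" unfolding r_def by (rule real_sqrt_le_mono)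
    then show ?thesis by simp
  qed
  define s where "s = (r - d) / (2*g)"
  have "s \<ge> 0" unfolding s_def using rge assms by auto
  moreover have "s * d + s^2 * g = D"
    unfolding s_def using assms r2 by (simp add: field_simps power2_eq_square) 
  ultimately show ?thesis by blast
qed

theorem theorem3p1:
  fixes A :: "real^'n^'n" and a :: "real^'n" and alpha :: real
    and B :: "'m::finite \<Rightarrow> real^'n^'n" and b :: "'m \<Rightarrow> real^'n" and beta :: "'m \<Rightarrow> real"
    and i0 :: 'm and lam :: real
  assumes symA: "symmetric_mat A"
    and symB: "\<And>i. symmetric_mat (B i)"
    and psdB: "\<And>i. psd (B i)"
    and pdB0: "pd (B i0)"
    and H1: "psd (A + lam *\<^sub>R B i0)"
    and H2: "\<exists>v. v \<noteq> 0 \<and> (A + lam *\<^sub>R B i0) *v v = 0 \<and> (a + lam *\<^sub>R b i0) \<bullet> v \<le> 0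
                 \<and> (\<forall>i. i \<noteq> i0 \<longrightarrow> B i *v v = 0 \<and> b i \<bullet> v \<le> 0)"
  shows "convex (Uset (quadf A a alpha) (\<lambda>i. quadf (B i) (b i) (beta i)))"
proof -
  obtain w where w0: "w \<noteq> 0" and wM: "(A + lam *\<^sub>R B i0) *v w = 0"
    and wa: "(a + lam *\<^sub>R b i0) \<bullet> w \<le> 0"
    and wi: "\<And>i. i \<noteq> i0 \<Longrightarrow> B i *v w = 0 \<and> b i \<bullet> w \<le> 0"
    using H2 by blast
  define f where "f = quadf A a alpha"
  define g where "g = (\<lambda>i. quadf (B i) (b i) (beta i))"
  define L where "L = quadf (A + lam *\<^sub>R B i0) (a + lam *\<^sub>R b i0) (alpha + lam * beta i0)"
  have Lfg: "\<And>x. L x = f x + lam * g i0 x" unfolding L_def f_def g_def by (rule qsum)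
  have symL: "symmetric_mat (A + lam *\<^sub>R B i0)"
  proof -
    have tr: "transpose (A + lam *\<^sub>R B i0) = transpose A + lam *\<^sub>R transpose (B i0)"
      by (simp add: transpose_def vec_eq_iff)
    show ?thesis using symA symB[of i0] tr by (simp add: symmetric_mat_def)
  qed
  have gam: "w \<bullet> (B i0 *v w) > 0" using pdB0 w0 by (simp add: pd_def)
  have key: "\<exists>x. f x \<le> t * f x1 + (1-t) * f x2 \<and> (\<forall>i. g i x \<le> t * g i x1 + (1-t) * g i x2)"
    if t: "0 \<le> t" "t \<le> 1" for t x1 x2
  proof -
    define xt where "xt = t *\<^sub>R x1 + (1-t) *\<^sub>R x2"
    define D where "D = t * g i0 x1 + (1-t) * g i0 x2 - g i0 xt"
    have D0: "D \<ge> 0" unfolding D_def xt_def g_def using qconv[OF psdB t] by simp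
    obtain s where s0: "s \<ge> 0"
      and sD: "s * (xt \<bullet> (B i0 *v w) + w \<bullet> (B i0 *v xt) + b i0 \<bullet> w) + s^2 * (w \<bullet> (B i0 *v w)) = D"
      using root_exists[OF gam D0] by blast
    define x where "x = xt + s *\<^sub>R w"
    have g0x: "g i0 x = t * g i0 x1 + (1-t) * g i0 x2"
      unfolding x_def using sD by (simp add: g_def qline D_def)
    have Lx: "L x = L xt + s * ((a + lam *\<^sub>R b i0) \<bullet> w)"
      unfolding x_def L_def qline using wM qsym[OF symL, of w xt] by simp
    have Lx2: "L x \<le> L xt" using Lx s0 wa by (simp add: mult_nonneg_nonpos)
    have Lxt: "L xt \<le> t * L x1 + (1-t) * L x2" unfolding xt_def L_def by (rule qconv[OF H1 t])
    have fx: "f x \<le> t * f x1 + (1-t) * f x2"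
      using Lx2 Lxt g0x Lfg[of x] Lfg[of xt] Lfg[of x1] Lfg[of x2] by (simp add: algebra_simps)
    have gx: "g i x \<le> t * g i x1 + (1-t) * g i x2" for i
    proof (cases "i = i0")
      case True then show ?thesis using g0x by simp
    next
      case False
      have e: "g i x = g i xt + s * (b i \<bullet> w)"
        unfolding x_def g_def qline using wi[OF False] qsym[OF symB[of i], of w xt] by simp
      have "s * (b i \<bullet> w) \<le> 0" using s0 wi[OF False] by (simp add: mult_nonneg_nonpos)
      moreover have "g i xt \<le> t * g i x1 + (1-t) * g i x2"
        unfolding xt_def g_def by (rule qconv[OF psdB t])
      ultimately show ?thesis using e by linarith
    qed
    show ?thesis using fx gx by blast
  qed
  show ?thesis
    unfolding f_def[symmetric] g_def[symmetric]
  proof (unfold convex_def, intro ballI allI impI)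
    fix p1 p2 and u v :: real
    assume p1: "p1 \<in> Uset f g" and p2: "p2 \<in> Uset f g" and u: "0 \<le> u" and v: "0 \<le> v" and uv: "u + v = 1"
    obtain x1 q1 where e1: "p1 = (f x1, \<chi> i. g i x1) + q1" and q1: "q1 \<in> orthant"
      using p1 unfolding Uset_def by blast
    obtain x2 q2 where e2: "p2 = (f x2, \<chi> i. g i x2) + q2" and q2: "q2 \<in> orthant"
      using p2 unfolding Uset_def by blast
    have v1: "v = 1 - u" using uv by simp
    obtain x where fx: "f x \<le> u * f x1 + (1-u) * f x2"
      and gx: "\<And>i. g i x \<le> u * g i x1 + (1-u) * g i x2"
      using key[of u x1 x2] u v uv by auto
    define q where "q = u *\<^sub>R p1 + v *\<^sub>R p2 - (f x, \<chi> i. g i x)"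
    have u1: "0 \<le> 1 - u" using v v1 by simp
    have "q \<in> orthant"
      unfolding orthant_def
    proof (intro CollectI conjI allI)
      have a1: "0 \<le> u * fst q1" using q1 u by (simp add: orthant_def)
      have a2: "0 \<le> (1-u) * fst q2" using q2 u1 by (simp add: orthant_def)
      show "0 \<le> fst q" unfolding q_def e1 e2 v1 using fx a1 a2 by (simp add: algebra_simps)
    next
      fix i
      have a1: "0 \<le> u * snd q1 $ i" using q1 u by (simp add: orthant_def)
      have a2: "0 \<le> (1-u) * snd q2 $ i" using q2 u1 by (simp add: orthant_def)
      show "0 \<le> snd q $ i" unfolding q_def e1 e2 v1 using gx[of i] a1 a2 by (simp add: algebra_simps)
    qed
    moreover have "u *\<^sub>R p1 + v *\<^sub>R p2 = (f x, \<chi> i. g i x) + q" unfolding q_def by simp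
    ultimately show "u *\<^sub>R p1 + v *\<^sub>R p2 \<in> Uset f g" unfolding Uset_def by blast
  qed
qed

end
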